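(* Let $f:[0,\infty)\to\mathbb{R}$ be convex with $f(1)=0$ and $G$ an increasing convex function with $G(0)=0$ such that $(G,f)$ is information-subadditive. Consider a message set $\mathcal{M}=\{1,\dots,|\mathcal{M}|\}$ with $|\mathcal{M}|\ge2$ and message $M$ uniform on $\mathcal{M}$, an encoder mapping each $m$ to a codeword $X^n(m)\in\mathcal{X}^n$, a memoryless channel $p_{Y^n|X^n}(y^n|x^n)=\prod_{i=1}^n W_{Y|X}(y_i|x_i)$ on finite alphabets, and a decoder mapping $Y^n$ to an estimate $\hat M\in\mathcal{M}$, with average error probability $\Pr(M\ne\hat M)=\epsilon$. Then $$n\ge \frac{G\!\left(\frac{1}{|\mathcal{M}|}f(|\mathcal{M}|(1-\epsilon))+\frac{|\mathcal{M}|-1}{|\mathcal{M}|}f\!\left(\frac{|\mathcal{M}|\epsilon}{|\mathcal{M}|-1}\right)\right)}{\max_{p_X} I_{G,f}(X;Y)},$$ where in the denominator $Y$ is the output of $W_{Y|X}$ with input $X\sim p_X$.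
   Context: For distributions $p\ll q$ on a finite set, $D_f(p\|q)=\sum_x q(x) f(p(x)/q(x))$ with $0f(0/0)=0$. For random variables $X,Y$ on finite sets, $I_{G,f}(X;Y)=\min_{q_Y}\sum_x p_X(x)\,G(D_f(p_{Y|X=x}\|q_Y))$. $(G,f)$ is information-subadditive if for all random variables $X,Y,Z$ on finite sets with $p_{XYZ}=p_Xp_{Y|X}p_{Z|X}$, $I_{G,f}(X;YZ)\le I_{G,f}(X;Y)+I_{G,f}(X;Z)$. *)

theory Defs
  imports "HOL-Analysis.Analysis"
begin

definition is_dist :: "'a set \<Rightarrow> ('a \<Rightarrow> real) \<Rightarrow> bool" where
  "is_dist A p \<longleftrightarrow> (\<forall>x\<in>A. 0 \<le> p x) \<and> sum p A = 1"

definition abs_cont :: "'a set \<Rightarrow> ('a \<Rightarrow> real) \<Rightarrow> ('a \<Rightarrow> real) \<Rightarrow> bool" where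
  "abs_cont A p q \<longleftrightarrow> (\<forall>x\<in>A. q x = 0 \<longrightarrow> p x = 0)"

text \<open>f-divergence; terms with q x = 0 (hence p x = 0) contribute 0 * f 0 = 0.\<close>
definition fdiv :: "(real \<Rightarrow> real) \<Rightarrow> 'a set \<Rightarrow> ('a \<Rightarrow> real) \<Rightarrow> ('a \<Rightarrow> real) \<Rightarrow> real" where
  "fdiv f A p q = (\<Sum>x\<in>A. q x * f (p x / q x))"

text \<open>I_{G,f}(X;Y) for X ~ pX on A and conditional law W x of Y given X = x on B.
  The minimum over q_Y ranges over distributions with p_{Y|X=x} << q_Y for all x in the
  support of pX (where D_f is defined); it is written as an infimum.\<close>
definition igf :: "(real \<Rightarrow> real) \<Rightarrow> (real \<Rightarrow> real) \<Rightarrow> 'a set \<Rightarrow> ('a \<Rightarrow> real)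
    \<Rightarrow> 'b set \<Rightarrow> ('a \<Rightarrow> 'b \<Rightarrow> real) \<Rightarrow> real" where
  "igf G f A pX B W =
     (INF q\<in>{q. is_dist B q \<and> (\<forall>x\<in>A. pX x > 0 \<longrightarrow> abs_cont B (W x) q)}.
        \<Sum>x\<in>A. pX x * G (fdiv f B (W x) q))"

text \<open>Information-subadditivity; finite alphabets are modelled as finite sets of naturals
  (every finite set is in bijection with one, and I_{G,f} is invariant under relabelling).\<close>
definition info_subadditive :: "(real \<Rightarrow> real) \<Rightarrow> (real \<Rightarrow> real) \<Rightarrow> bool" where
  "info_subadditive G f \<longleftrightarrow>
    (\<forall>(A::nat set) (B::nat set) (C::nat set) pX WY WZ.
       finite A \<and> finite B \<and> finite C \<and> is_dist A pX \<and>
       (\<forall>x\<in>A. is_dist B (WY x)) \<and> (\<forall>x\<in>A. is_dist C (WZ x)) \<longrightarrow>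
       igf G f A pX (B \<times> C) (\<lambda>x (y, z). WY x y * WZ x z)
         \<le> igf G f A pX B WY + igf G f A pX C WZ)"

end

theory Submission
  imports Defs
begin


lemma persp_jensen:
  fixes f :: "real \<Rightarrow> real"
  assumes cf: "convex_on {0..} f" and fin: "finite S"
   and w: "\<And>s. s\<in>S \<Longrightarrow> 0 \<le> w s" and v: "\<And>s. s\<in>S \<Longrightarrow> 0 \<le> v s"
   and wv: "\<And>s. s\<in>S \<Longrightarrow> w s = 0 \<Longrightarrow> v s = 0"
  shows "sum w S * f (sum v S / sum w S) \<le> (\<Sum>s\<in>S. w s * f (v s / w s))"
proof (cases "sum w S = 0")
  case True
  then have "\<forall>s\<in>S. w s = 0" using sum_nonneg_eq_0_iff[OF fin] w by blast
  then show ?thesis using True by simp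
next
  case False
  define Wt where "Wt = sum w S"
  have "0 \<le> sum w S" by (rule sum_nonneg) (use w in auto)
  then have Wt: "Wt > 0" using False unfolding Wt_def by linarith
  have ne: "S \<noteq> {}" using False by auto
  have "f (\<Sum>s\<in>S. (w s / Wt) *\<^sub>R (v s / w s)) \<le> (\<Sum>s\<in>S. (w s / Wt) * f (v s / w s))"
    apply (rule convex_on_sum[OF fin ne cf])
    using w v Wt by (auto simp: Wt_def sum_divide_distrib[symmetric])
  moreover have "(\<Sum>s\<in>S. (w s / Wt) *\<^sub>R (v s / w s)) = sum v S / Wt"
    unfolding sum_divide_distrib
    by (rule sum.cong) (use wv in auto)
  ultimately have "f (sum v S / Wt) \<le> (\<Sum>s\<in>S. w s * f (v s / w s)) / Wt"
    by (simp add: sum_divide_distrib)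
  then show ?thesis using Wt unfolding Wt_def[symmetric] by (simp add: field_simps)
qed

lemma fdiv_nonneg:
  fixes f :: "real \<Rightarrow> real"
  assumes cf: "convex_on {0..} f" and f1: "f 1 = 0" and fin: "finite B"
    and p: "is_dist B p" and q: "is_dist B q" and ac: "abs_cont B p q"
  shows "0 \<le> fdiv f B p q"
proof -
  have "sum q B * f (sum p B / sum q B) \<le> fdiv f B p q"
    unfolding fdiv_def
    by (rule persp_jensen[OF cf fin]) (use p q ac in \<open>auto simp: is_dist_def abs_cont_def\<close>)
  then show ?thesis using p q f1 by (simp add: is_dist_def)
qed



definition admQ :: "'a set \<Rightarrow> ('a \<Rightarrow> real) \<Rightarrow> 'b set \<Rightarrow> ('a \<Rightarrow> 'b \<Rightarrow> real) \<Rightarrow> ('b \<Rightarrow> real) set" where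
  "admQ A pX B W = {q. is_dist B q \<and> (\<forall>x\<in>A. pX x > 0 \<longrightarrow> abs_cont B (W x) q)}"

definition Phi :: "(real \<Rightarrow> real) \<Rightarrow> (real \<Rightarrow> real) \<Rightarrow> 'a set \<Rightarrow> ('a \<Rightarrow> real) \<Rightarrow> 'b set \<Rightarrow> ('a \<Rightarrow> 'b \<Rightarrow> real) \<Rightarrow> ('b \<Rightarrow> real) \<Rightarrow> real" where
  "Phi G f A pX B W q = (\<Sum>x\<in>A. pX x * G (fdiv f B (W x) q))"

lemma igf_alt: "igf G f A pX B W = Inf (Phi G f A pX B W ` admQ A pX B W)"
  unfolding igf_def admQ_def Phi_def by simp

locale setting =
  fixes f G :: "real \<Rightarrow> real"
  assumes cf: "convex_on {0..} f" and f1: "f 1 = 0"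
    and Gm: "mono_on {0..} G" and G0: "G 0 = 0"
begin

lemma G_nonneg: "0 \<le> t \<Longrightarrow> 0 \<le> G t"
  using Gm G0 by (metis atLeast_iff mono_onD order_refl)

lemma Phi_nonneg:
  assumes "finite A" "finite B" "\<forall>x\<in>A. pX x \<ge> 0" "\<forall>x\<in>A. pX x > 0 \<longrightarrow> is_dist B (W x)"
    and "q \<in> admQ A pX B W"
  shows "0 \<le> Phi G f A pX B W q"
  unfolding Phi_def
proof (rule sum_nonneg)
  fix x assume x: "x \<in> A"
  show "0 \<le> pX x * G (fdiv f B (W x) q)"
  proof (cases "pX x > 0")
    case True
    then have "0 \<le> fdiv f B (W x) q"
      using assms x by (intro fdiv_nonneg[OF cf f1]) (auto simp: admQ_def)
    then show ?thesis using True G_nonneg by simp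
  next
    case False
    then have "pX x = 0" using assms x by force
    then show ?thesis by simp
  qed
qed

lemma igf_le:
  assumes "finite A" "finite B" "\<forall>x\<in>A. pX x \<ge> 0" "\<forall>x\<in>A. pX x > 0 \<longrightarrow> is_dist B (W x)"
    and "q \<in> admQ A pX B W"
  shows "igf G f A pX B W \<le> Phi G f A pX B W q"
  unfolding igf_alt
  apply (rule cINF_lower[OF _ assms(5)])
  apply (rule bdd_belowI[of _ 0])
  using Phi_nonneg[OF assms(1-4)] by auto

lemma igf_ge:
  assumes "admQ A pX B W \<noteq> {}" "\<And>q. q \<in> admQ A pX B W \<Longrightarrow> c \<le> Phi G f A pX B W q"
  shows "c \<le> igf G f A pX B W"
  unfolding igf_alt by (rule cINF_greatest) (use assms in auto)

lemma igf_nonneg: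
  assumes "finite A" "finite B" "\<forall>x\<in>A. pX x \<ge> 0" "\<forall>x\<in>A. pX x > 0 \<longrightarrow> is_dist B (W x)"
    and "admQ A pX B W \<noteq> {}"
  shows "0 \<le> igf G f A pX B W"
  by (rule igf_ge[OF assms(5)]) (rule Phi_nonneg[OF assms(1-4)])

end

lemma uniform_adm:
  assumes "finite B" "B \<noteq> {}"
  shows "(\<lambda>_. 1 / real (card B)) \<in> admQ A pX B W"
  using assms by (auto simp: admQ_def is_dist_def abs_cont_def card_gt_0_iff)

lemma igf_cong:
  assumes "\<forall>x\<in>A. \<forall>b\<in>B. W x b = W' x b"
  shows "igf G f A pX B W = igf G f A pX B W'"
proof -
  have 1: "admQ A pX B W = admQ A pX B W'"
    using assms unfolding admQ_def abs_cont_def by auto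
  have 2: "Phi G f A pX B W q = Phi G f A pX B W' q" for q
    using assms unfolding Phi_def fdiv_def by (intro sum.cong refl) auto
  show ?thesis unfolding igf_alt 1 2 ..
qed

lemma igf_relabel:
  assumes h: "bij_betw h B B'"
  shows "igf G f A pX B' W' = igf G f A pX B (\<lambda>x b. W' x (h b))"
proof -
  let ?W = "\<lambda>x b. W' x (h b)"
  have fd: "fdiv f B' p q = fdiv f B (p \<circ> h) (q \<circ> h)" for p q
    unfolding fdiv_def using sum.reindex_bij_betw[OF h, symmetric] by (simp add: o_def)
  have sd: "sum q B' = sum (q \<circ> h) B" for q :: "_ \<Rightarrow> real"
    using sum.reindex_bij_betw[OF h, symmetric] by (simp add: o_def)
  have nn: "(\<forall>b\<in>B'. P (q b)) \<longleftrightarrow> (\<forall>b\<in>B. P (q (h b)))" for P q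
    using h by (auto simp: bij_betw_def)
  have adm: "q \<in> admQ A pX B' W' \<longleftrightarrow> q \<circ> h \<in> admQ A pX B ?W" for q
    unfolding admQ_def is_dist_def abs_cont_def mem_Collect_eq sd
    using h by (auto simp: bij_betw_def o_def)
  have ph: "Phi G f A pX B' W' q = Phi G f A pX B ?W (q \<circ> h)" for q
    unfolding Phi_def fd by (simp add: o_def)
  have congB: "q1 \<in> admQ A pX B ?W \<Longrightarrow> \<forall>b\<in>B. q1 b = q2 b \<Longrightarrow> q2 \<in> admQ A pX B ?W
     \<and> Phi G f A pX B ?W q1 = Phi G f A pX B ?W q2" for q1 q2
    unfolding admQ_def is_dist_def abs_cont_def Phi_def fdiv_def
    by (auto intro!: sum.cong simp: sum.cong[of B B q1 q2])
  have "Phi G f A pX B' W' ` admQ A pX B' W' = Phi G f A pX B ?W ` admQ A pX B ?W"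
  proof (intro equalityI subsetI)
    fix t assume "t \<in> Phi G f A pX B' W' ` admQ A pX B' W'"
    then obtain q where "q \<in> admQ A pX B' W'" "t = Phi G f A pX B' W' q" by auto
    then show "t \<in> Phi G f A pX B ?W ` admQ A pX B ?W" using adm ph by auto
  next
    fix t assume "t \<in> Phi G f A pX B ?W ` admQ A pX B ?W"
    then obtain q where q: "q \<in> admQ A pX B ?W" "t = Phi G f A pX B ?W q" by auto
    define q' where "q' = q \<circ> inv_into B h"
    have eq: "\<forall>b\<in>B. q b = (q' \<circ> h) b"
      using h by (auto simp: q'_def bij_betw_def)
    from congB[OF q(1) eq] have "q' \<circ> h \<in> admQ A pX B ?W" "t = Phi G f A pX B ?W (q' \<circ> h)"
      using q by (auto simp: o_def)
    then show "t \<in> Phi G f A pX B' W' ` admQ A pX B' W'" using adm ph by auto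
  qed
  then show ?thesis unfolding igf_alt by simp
qed



lemma is_dist_relabel:
  assumes "bij_betw g B' B" "is_dist B p"
  shows "is_dist B' (\<lambda>y. p (g y))"
  using assms sum.reindex_bij_betw[OF assms(1), of p]
  by (auto simp: is_dist_def bij_betw_def)

lemma subadd_gen:
  fixes A :: "nat set" and B :: "'b set" and C :: "'c set"
  assumes sa: "info_subadditive G f" and fin: "finite A" "finite B" "finite C"
    and d: "is_dist A pX" "\<forall>x\<in>A. is_dist B (WY x)" "\<forall>x\<in>A. is_dist C (WZ x)"
  shows "igf G f A pX (B \<times> C) (\<lambda>x (y,z). WY x y * WZ x z)
         \<le> igf G f A pX B WY + igf G f A pX C WZ"
proof -
  obtain hB where hB: "bij_betw hB B {0..<card B}" using ex_bij_betw_finite_nat[OF fin(2)] by blast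
  obtain hC where hC: "bij_betw hC C {0..<card C}" using ex_bij_betw_finite_nat[OF fin(3)] by blast
  define gB where "gB = inv_into B hB"
  define gC where "gC = inv_into C hC"
  have gB: "bij_betw gB {0..<card B} B" unfolding gB_def by (rule bij_betw_inv_into[OF hB])
  have gC: "bij_betw gC {0..<card C} C" unfolding gC_def by (rule bij_betw_inv_into[OF hC])
  have gBh: "\<And>b. b \<in> B \<Longrightarrow> gB (hB b) = b" unfolding gB_def using hB
    by (simp add: bij_betw_def)
  have gCh: "\<And>b. b \<in> C \<Longrightarrow> gC (hC b) = b" unfolding gC_def using hC
    by (simp add: bij_betw_def)
  define WY' where "WY' = (\<lambda>x y. WY x (gB y))"
  define WZ' where "WZ' = (\<lambda>x y. WZ x (gC y))"
  have 1: "igf G f A pX {0..<card B} WY' = igf G f A pX B WY"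
    unfolding igf_relabel[OF hB] by (rule igf_cong) (simp add: WY'_def gBh)
  have 2: "igf G f A pX {0..<card C} WZ' = igf G f A pX C WZ"
    unfolding igf_relabel[OF hC] by (rule igf_cong) (simp add: WZ'_def gCh)
  have 3: "igf G f A pX ({0..<card B} \<times> {0..<card C}) (\<lambda>x (y,z). WY' x y * WZ' x z)
     = igf G f A pX (B \<times> C) (\<lambda>x (y,z). WY x y * WZ x z)"
    unfolding igf_relabel[OF bij_betw_map_prod[OF hB hC]] by (rule igf_cong) (auto simp: WY'_def WZ'_def gBh gCh)
  have "igf G f A pX ({0..<card B} \<times> {0..<card C}) (\<lambda>x (y,z). WY' x y * WZ' x z)
     \<le> igf G f A pX {0..<card B} WY' + igf G f A pX {0..<card C} WZ'"
    using sa unfolding info_subadditive_def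
  proof (elim allE impE)
    show "finite A \<and> finite {0..<card B} \<and> finite {0..<card C} \<and> is_dist A pX \<and>
      (\<forall>x\<in>A. is_dist {0..<card B} (WY' x)) \<and> (\<forall>x\<in>A. is_dist {0..<card C} (WZ' x))"
      using fin d is_dist_relabel[OF gB] is_dist_relabel[OF gC] by (simp add: WY'_def WZ'_def)
  qed
  then show ?thesis unfolding 1 2 3 .
qed



definition Yk :: "nat \<Rightarrow> (nat \<Rightarrow> 'y::finite) set" where
  "Yk k = PiE {..<k} (\<lambda>_. UNIV)"

definition Pk :: "('x \<Rightarrow> 'y \<Rightarrow> real) \<Rightarrow> (nat \<Rightarrow> nat \<Rightarrow> 'x) \<Rightarrow> nat \<Rightarrow> nat \<Rightarrow> (nat \<Rightarrow> 'y) \<Rightarrow> real" where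
  "Pk W enc k m y = (\<Prod>i<k. W (enc m i) (y i))"

lemma Yk_finite: "finite (Yk k)" unfolding Yk_def by (simp add: finite_PiE)
lemma Yk_ne: "Yk k \<noteq> {}" unfolding Yk_def by (simp add: PiE_eq_empty_iff)

lemma Pk_dist:
  assumes W: "\<forall>x. is_dist UNIV (W x)"
  shows "is_dist (Yk k) (Pk W enc k m)"
proof -
  have "(\<Prod>i<k. \<Sum>y\<in>UNIV. W (enc m i) y) = (\<Sum>g\<in>Yk k. \<Prod>i<k. W (enc m i) (g i))"
    unfolding Yk_def by (rule prod_sum_PiE) auto
  moreover have "(\<Prod>i<k. \<Sum>y\<in>UNIV. W (enc m i) y) = 1" using W by (simp add: is_dist_def)
  ultimately show ?thesis using W unfolding is_dist_def Pk_def
    by (auto intro!: prod_nonneg)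
qed

lemma bij_Yk: "bij_betw (\<lambda>y. (restrict y {..<k}, y k)) (Yk (Suc k)) (Yk k \<times> UNIV)"
proof (rule bij_betw_byWitness[where f'="\<lambda>(g,b). g(k:=b)"])
  show "\<forall>a\<in>Yk (Suc k). (case (restrict a {..<k}, a k) of (g, b) \<Rightarrow> g(k := b)) = a"
    by (auto simp: Yk_def PiE_iff extensional_def fun_eq_iff)
  show "\<forall>a'\<in>Yk k \<times> UNIV. (restrict (case a' of (g, b) \<Rightarrow> g(k := b)) {..<k}, (case a' of (g, b) \<Rightarrow> g(k := b)) k) = a'"
    by (auto simp: Yk_def PiE_iff extensional_def fun_eq_iff)
  show "(\<lambda>y. (restrict y {..<k}, y k)) ` Yk (Suc k) \<subseteq> Yk k \<times> UNIV"
    by (auto simp: Yk_def)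
  show "(\<lambda>(g, b). g(k := b)) ` (Yk k \<times> UNIV) \<subseteq> Yk (Suc k)"
    by (auto simp: Yk_def PiE_iff extensional_def split: if_splits) (metis less_Suc_eq)
qed

context setting begin

lemma chain:
  fixes W :: "'x::finite \<Rightarrow> 'y::finite \<Rightarrow> real" and enc :: "nat \<Rightarrow> nat \<Rightarrow> 'x"
  assumes sa: "info_subadditive G f" and K: "K \<ge> 1" and W: "\<forall>x. is_dist UNIV (W x)"
  shows "igf G f {1..K} (\<lambda>_. 1 / real K) (Yk k) (Pk W enc k)
    \<le> (\<Sum>i<k. igf G f {1..K} (\<lambda>_. 1 / real K) UNIV (\<lambda>m. W (enc m i)))"
proof (induction k)
  case 0
  have Y0: "Yk 0 = {\<lambda>_. undefined}" unfolding Yk_def by simp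
  have adm: "(\<lambda>_. 1) \<in> admQ {1..K} (\<lambda>_. 1 / real K) (Yk 0) (Pk W enc 0)"
    by (simp add: admQ_def is_dist_def abs_cont_def Y0)
  have "igf G f {1..K} (\<lambda>_. 1 / real K) (Yk 0) (Pk W enc 0)
     \<le> Phi G f {1..K} (\<lambda>_. 1 / real K) (Yk 0) (Pk W enc 0) (\<lambda>_. 1)"
    by (rule igf_le[OF _ Yk_finite _ _ adm]) (auto simp: Pk_dist[OF W])
  also have "\<dots> = 0" by (simp add: Phi_def fdiv_def Y0 Pk_def f1 G0)
  finally show ?case by simp
next
  case (Suc k)
  let ?u = "\<lambda>_::nat. 1 / real K"
  have "igf G f {1..K} ?u (Yk (Suc k)) (Pk W enc (Suc k))
     = igf G f {1..K} ?u (Yk k \<times> UNIV) (\<lambda>m (y,z). Pk W enc k m y * W (enc m k) z)"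
    unfolding igf_relabel[OF bij_Yk]
    by (rule igf_cong) (auto simp: Pk_def Yk_def intro!: prod.cong)
  also have "\<dots> \<le> igf G f {1..K} ?u (Yk k) (Pk W enc k) + igf G f {1..K} ?u UNIV (\<lambda>m. W (enc m k))"
    by (rule subadd_gen[OF sa]) (use K W Pk_dist[OF W] Yk_finite in \<open>auto simp: is_dist_def\<close>)
  also have "\<dots> \<le> (\<Sum>i<Suc k. igf G f {1..K} ?u UNIV (\<lambda>m. W (enc m i)))"
    using Suc by simp
  finally show ?case .
qed

end


context setting begin

lemma numer:
  fixes W :: "'x::finite \<Rightarrow> 'y::finite \<Rightarrow> real" and enc :: "nat \<Rightarrow> nat \<Rightarrow> 'x"
    and dec :: "(nat \<Rightarrow> 'y) \<Rightarrow> nat"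
  assumes Gc: "convex_on {0..} G" and K: "K \<ge> 2" and W: "\<forall>x. is_dist UNIV (W x)"
    and dr: "\<forall>y\<in>Yk n. dec y \<in> {1..K}"
    and err: "\<epsilon> = (1 / real K) * (\<Sum>m\<in>{1..K}. \<Sum>y\<in>Yk n.
                 Pk W enc n m y * (if dec y \<noteq> m then 1 else 0))"
  shows "G (1 / real K * f (real K * (1 - \<epsilon>))
       + (real K - 1) / real K * f (real K * \<epsilon> / (real K - 1)))
     \<le> igf G f {1..K} (\<lambda>_. 1 / real K) (Yk n) (Pk W enc n)"
proof (rule igf_ge)
  let ?u = "\<lambda>_::nat. 1 / real K"
  let ?Y = "Yk n :: (nat \<Rightarrow> 'y) set"
  let ?P = "Pk W enc n"
  let ?S = "{1..K} \<times> ?Y"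
  have Kp: "real K > 0" "real K \<ge> 2" using K by auto
  have finS: "finite ?S" by (intro finite_cartesian_product finite_atLeastAtMost Yk_finite)
  have Pd: "\<And>m. is_dist ?Y (?P m)" by (rule Pk_dist[OF W])
  show "admQ {1..K} ?u ?Y ?P \<noteq> {}" using uniform_adm[OF Yk_finite Yk_ne] by blast
  fix q assume q: "q \<in> admQ {1..K} ?u ?Y ?P"
  have qd: "is_dist ?Y q" and ac: "\<And>m. m \<in> {1..K} \<Longrightarrow> abs_cont ?Y (?P m) q"
    using q Kp by (auto simp: admQ_def)
  define D where "D m = fdiv f ?Y (?P m) q" for m
  have D0: "\<And>m. m \<in> {1..K} \<Longrightarrow> 0 \<le> D m"
    unfolding D_def by (rule fdiv_nonneg[OF cf f1 Yk_finite Pd qd ac])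
  define wE where "wE = (\<lambda>(m,y). if dec y = m then q y / K else 0)"
  define vE where "vE = (\<lambda>(m,y). if dec y = m then ?P m y / K else 0)"
  define wN where "wN = (\<lambda>(m,y). if dec y \<noteq> m then q y / K else 0)"
  define vN where "vN = (\<lambda>(m,y). if dec y \<noteq> m then ?P m y / K else 0)"
  have q0: "\<And>y. y \<in> ?Y \<Longrightarrow> 0 \<le> q y" using qd by (simp add: is_dist_def)
  have P0: "\<And>m y. y \<in> ?Y \<Longrightarrow> 0 \<le> ?P m y" using Pd by (simp add: is_dist_def)
  have acq: "\<And>m y. m \<in> {1..K} \<Longrightarrow> y \<in> ?Y \<Longrightarrow> q y = 0 \<Longrightarrow> ?P m y = 0"
    using ac by (simp add: abs_cont_def)
  have avg: "(\<Sum>m\<in>{1..K}. 1 / real K * D m)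
      = (\<Sum>s\<in>?S. wE s * f (vE s / wE s)) + (\<Sum>s\<in>?S. wN s * f (vN s / wN s))"
  proof -
    have "(\<Sum>m\<in>{1..K}. 1 / real K * D m) = (\<Sum>m\<in>{1..K}. \<Sum>y\<in>?Y. q y / K * f ((?P m y / K) / (q y / K)))"
      unfolding D_def fdiv_def sum_distrib_left using Kp by (intro sum.cong refl) (simp)
    also have "\<dots> = (\<Sum>s\<in>?S. (\<lambda>(m,y). q y / K * f ((?P m y / K) / (q y / K))) s)"
      using Kp by (simp add: sum.cartesian_product)
    also have "\<dots> = (\<Sum>s\<in>?S. wE s * f (vE s / wE s) + wN s * f (vN s / wN s))"
      by (intro sum.cong refl) (auto simp: wE_def vE_def wN_def vN_def)
    finally show ?thesis by (simp add: sum.distrib)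
  qed
  have sq: "(\<Sum>s\<in>?S. wE s + wN s) = 1"
  proof -
    have "(\<Sum>s\<in>?S. wE s + wN s) = (\<Sum>s\<in>?S. (\<lambda>(m,y). q y / K) s)"
      by (intro sum.cong refl) (auto simp: wE_def wN_def)
    also have "\<dots> = (\<Sum>m\<in>{1..K}. \<Sum>y\<in>?Y. q y / K)"
      by (simp only: sum.cartesian_product)
    also have "\<dots> = 1" using qd Kp by (simp add: is_dist_def sum_divide_distrib[symmetric])
    finally show ?thesis .
  qed
  have sP: "(\<Sum>s\<in>?S. vE s + vN s) = 1"
  proof -
    have "(\<Sum>s\<in>?S. vE s + vN s) = (\<Sum>s\<in>?S. (\<lambda>(m,y). ?P m y / K) s)"
      by (intro sum.cong refl) (auto simp: vE_def vN_def)
    also have "\<dots> = (\<Sum>m\<in>{1..K}. \<Sum>y\<in>?Y. ?P m y / K)"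
      by (simp only: sum.cartesian_product)
    also have "\<dots> = 1" using Pd Kp by (simp add: is_dist_def sum_divide_distrib[symmetric])
    finally show ?thesis .
  qed
  have swE: "sum wE ?S = 1 / K"
  proof -
    have "sum wE ?S = (\<Sum>m\<in>{1..K}. \<Sum>y\<in>?Y. if dec y = m then q y / K else 0)"
      by (simp add: sum.cartesian_product wE_def)
    also have "\<dots> = (\<Sum>y\<in>?Y. \<Sum>m\<in>{1..K}. if dec y = m then q y / K else 0)"
      by (rule sum.swap)
    also have "\<dots> = (\<Sum>y\<in>?Y. q y / K)"
      by (intro sum.cong refl) (use dr in \<open>auto simp: sum.delta'\<close>)
    also have "\<dots> = 1 / K" using qd by (simp add: is_dist_def sum_divide_distrib[symmetric])
    finally show ?thesis .
  qed
  have swN: "sum wN ?S = (real K - 1) / K"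
  proof -
    have "sum wN ?S = 1 - 1 / K" using sq swE unfolding sum.distrib by linarith
    then show ?thesis using Kp by (simp add: field_simps)
  qed
  have svN: "sum vN ?S = \<epsilon>"
    unfolding err by (simp add: sum.cartesian_product vN_def sum_distrib_left sum_divide_distrib)
      (intro sum.cong refl, auto)
  have svE: "sum vE ?S = 1 - \<epsilon>"
    using sP svN unfolding sum.distrib by simp
  have JE: "sum wE ?S * f (sum vE ?S / sum wE ?S) \<le> (\<Sum>s\<in>?S. wE s * f (vE s / wE s))"
    by (rule persp_jensen[OF cf finS])
      (use q0 P0 acq Kp in \<open>auto simp: wE_def vE_def split: if_splits\<close>)
  have JN: "sum wN ?S * f (sum vN ?S / sum wN ?S) \<le> (\<Sum>s\<in>?S. wN s * f (vN s / wN s))"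
    by (rule persp_jensen[OF cf finS])
      (use q0 P0 acq Kp in \<open>auto simp: wN_def vN_def split: if_splits\<close>)
  have vE0: "0 \<le> sum vE ?S" by (rule sum_nonneg) (use P0 Kp in \<open>auto simp: vE_def\<close>)
  have vN0: "0 \<le> sum vN ?S" by (rule sum_nonneg) (use P0 Kp in \<open>auto simp: vN_def\<close>)
  define bin where "bin = 1 / real K * f (real K * (1 - \<epsilon>))
       + (real K - 1) / real K * f (real K * \<epsilon> / (real K - 1))"
  have e1: "sum vE ?S / sum wE ?S = real K * (1 - \<epsilon>)" using svE swE by simp
  have e2: "sum vN ?S / sum wN ?S = real K * \<epsilon> / (real K - 1)" using svN swN Kp by simp
  have binle: "bin \<le> (\<Sum>m\<in>{1..K}. 1 / real K * D m)"
    using JE[unfolded e1, unfolded swE] JN[unfolded e2, unfolded swN] unfolding avg bin_def by simp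
  have bin0: "0 \<le> bin"
  proof -
    have "f ((1 - 1 / real K) *\<^sub>R (real K * \<epsilon> / (real K - 1)) + (1 / real K) *\<^sub>R (real K * (1 - \<epsilon>)))
      \<le> (1 - 1 / real K) * f (real K * \<epsilon> / (real K - 1)) + (1 / real K) * f (real K * (1 - \<epsilon>))"
      by (rule convex_onD[OF cf]) (use Kp vE0 vN0 svE svN in auto)
    moreover have "(1 - 1 / real K) *\<^sub>R (real K * \<epsilon> / (real K - 1)) + (1 / real K) *\<^sub>R (real K * (1 - \<epsilon>)) = 1"
      using Kp by (simp add: field_simps)
    moreover have "1 - 1 / real K = (real K - 1) / real K" using Kp by (simp add: field_simps)
    ultimately show ?thesis unfolding bin_def using f1 by simp
  qed
  have "G (\<Sum>m\<in>{1..K}. (1 / real K) *\<^sub>R D m) \<le> (\<Sum>m\<in>{1..K}. (1 / real K) * G (D m))"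
    by (rule convex_on_sum[OF _ _ Gc]) (use D0 Kp in auto)
  moreover have "G bin \<le> G (\<Sum>m\<in>{1..K}. 1 / real K * D m)"
    by (rule mono_onD[OF Gm]) (use bin0 binle in auto)
  ultimately have "G bin \<le> (\<Sum>m\<in>{1..K}. (1 / real K) * G (D m))" by simp
  then show "G (1 / real K * f (real K * (1 - \<epsilon>))
       + (real K - 1) / real K * f (real K * \<epsilon> / (real K - 1))) \<le> Phi G f {1..K} ?u ?Y ?P q"
    by (simp add: Phi_def D_def bin_def)
qed

end


lemma card_group_sum:
  fixes g :: "nat \<Rightarrow> 'x::finite"
  assumes "finite S"
  shows "(\<Sum>x\<in>UNIV. real (card {m\<in>S. g m = x})) = real (card S)"
  using sum_fun_comp[OF assms finite_class.finite_UNIV subset_UNIV, of "\<lambda>_. 1::real" g] by simp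

lemma J_eq:
  fixes W :: "'x::finite \<Rightarrow> 'y::finite \<Rightarrow> real" and enc :: "nat \<Rightarrow> nat \<Rightarrow> 'x" and i :: nat
  assumes K: "K \<ge> 1"
  defines "pX \<equiv> \<lambda>x. real (card {m\<in>{1..K}. enc m i = x}) / real K"
  shows "is_dist UNIV pX"
    and "igf G f {1..K} (\<lambda>_. 1 / real K) UNIV (\<lambda>m. W (enc m i)) = igf G f UNIV pX UNIV W"
proof -
  show "is_dist UNIV pX"
    using K card_group_sum[of "{1..K}" "\<lambda>m. enc m i"]
    by (simp add: is_dist_def pX_def sum_divide_distrib[symmetric])
  have pos: "pX x > 0 \<longleftrightarrow> (\<exists>m\<in>{1..K}. enc m i = x)" for x
  proof -
    have "pX x > 0 \<longleftrightarrow> card {m\<in>{1..K}. enc m i = x} > 0"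
      using K by (simp add: pX_def zero_less_divide_iff)
    also have "\<dots> \<longleftrightarrow> (\<exists>m\<in>{1..K}. enc m i = x)" by (subst card_gt_0_iff) auto
    finally show ?thesis .
  qed
  have adm: "admQ {1..K} (\<lambda>_. 1 / real K) UNIV (\<lambda>m. W (enc m i)) = admQ UNIV pX UNIV W"
    unfolding admQ_def using pos K by auto
  have ph: "Phi G f {1..K} (\<lambda>_. 1 / real K) UNIV (\<lambda>m. W (enc m i)) q = Phi G f UNIV pX UNIV W q" for q
    unfolding Phi_def pX_def
    using sum_fun_comp[OF finite_atLeastAtMost finite_class.finite_UNIV subset_UNIV,
        of "\<lambda>x. 1 / real K * G (fdiv f UNIV (W x) q)" "\<lambda>m. enc m i" 1 K]
    by simp
  show "igf G f {1..K} (\<lambda>_. 1 / real K) UNIV (\<lambda>m. W (enc m i)) = igf G f UNIV pX UNIV W"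
    unfolding igf_alt adm ph ..
qed

context setting begin

lemma cap_bdd:
  fixes W :: "'x::finite \<Rightarrow> 'y::finite \<Rightarrow> real"
  assumes W: "\<forall>x. is_dist UNIV (W x)"
  shows "bdd_above ((\<lambda>p. igf G f UNIV p UNIV W) ` {p. is_dist UNIV p})"
    and "\<And>p. is_dist UNIV p \<Longrightarrow> 0 \<le> igf G f UNIV p UNIV W"
proof -
  let ?u = "\<lambda>_::'y. 1 / real (card (UNIV::'y set))"
  have adm: "?u \<in> admQ UNIV p UNIV W" for p :: "'x \<Rightarrow> real"
    by (rule uniform_adm) auto
  have Gn: "0 \<le> G (fdiv f UNIV (W x) ?u)" for x
    apply (rule G_nonneg, rule fdiv_nonneg[OF cf f1])
    using W adm[of "\<lambda>_. 1"] by (auto simp: admQ_def)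
  show "0 \<le> igf G f UNIV p UNIV W" if "is_dist UNIV p" for p
    apply (rule igf_nonneg) using that W adm[of p] by (auto simp: is_dist_def)
  show "bdd_above ((\<lambda>p. igf G f UNIV p UNIV W) ` {p. is_dist UNIV p})"
  proof (rule bdd_aboveI2)
    fix p :: "'x \<Rightarrow> real" assume "p \<in> {p. is_dist UNIV p}"
    then have p: "is_dist UNIV p" by simp
    have "igf G f UNIV p UNIV W \<le> Phi G f UNIV p UNIV W ?u"
      by (rule igf_le[OF _ _ _ _ adm]) (use p W in \<open>auto simp: is_dist_def\<close>)
    also have "\<dots> \<le> (\<Sum>x\<in>UNIV. 1 * G (fdiv f UNIV (W x) ?u))"
      unfolding Phi_def
    proof (rule sum_mono)
      fix x :: 'x
      have "p x \<le> sum p UNIV"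
        by (rule member_le_sum) (use p in \<open>auto simp: is_dist_def\<close>)
      then have "p x \<le> 1" using p by (simp add: is_dist_def)
      then show "p x * G (fdiv f UNIV (W x) ?u) \<le> 1 * G (fdiv f UNIV (W x) ?u)"
        using Gn[of x] by (intro mult_right_mono) auto
    qed
    finally show "igf G f UNIV p UNIV W \<le> (\<Sum>x\<in>UNIV. 1 * G (fdiv f UNIV (W x) ?u))" .
  qed
qed

end

theorem theorem5:
  fixes f G :: "real \<Rightarrow> real"
    and K n :: nat
    and W :: "'x::finite \<Rightarrow> 'y::finite \<Rightarrow> real"
    and enc :: "nat \<Rightarrow> nat \<Rightarrow> 'x"
    and dec :: "(nat \<Rightarrow> 'y) \<Rightarrow> nat"
    and \<epsilon> :: real
  assumes f_convex: "convex_on {0..} f" and f1: "f 1 = 0"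
    and G_mono: "mono_on {0..} G" and G_convex: "convex_on {0..} G" and G0: "G 0 = 0"
    and subadd: "info_subadditive G f"
    and K: "K \<ge> 2"
    and W: "\<forall>x. is_dist UNIV (W x)"
    and dec_range: "\<forall>y\<in>PiE {..<n} (\<lambda>_. UNIV). dec y \<in> {1..K}"
    and err: "\<epsilon> = (1 / real K) * (\<Sum>m\<in>{1..K}. \<Sum>y\<in>PiE {..<n} (\<lambda>_. UNIV).
                 (\<Prod>i<n. W (enc m i) (y i)) * (if dec y \<noteq> m then 1 else 0))"
  shows "real n \<ge>
    G (1 / real K * f (real K * (1 - \<epsilon>))
       + (real K - 1) / real K * f (real K * \<epsilon> / (real K - 1)))
    / (SUP pX\<in>{p. is_dist UNIV p}. igf G f UNIV pX UNIV W)"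
proof -
  interpret setting f G by unfold_locales (use f_convex f1 G_mono G0 in auto)
  define C where "C = (SUP pX\<in>{p. is_dist UNIV p}. igf G f UNIV pX UNIV W)"
  define bin where "bin = 1 / real K * f (real K * (1 - \<epsilon>))
       + (real K - 1) / real K * f (real K * \<epsilon> / (real K - 1))"
  let ?u = "\<lambda>_::nat. 1 / real K"
  have K1: "K \<ge> 1" using K by simp
  have Jle: "igf G f {1..K} ?u UNIV (\<lambda>m. W (enc m i)) \<le> C" for i
  proof -
    note J1 = J_eq(1)[where enc=enc and i=i, OF K1]
    note J2 = J_eq(2)[where enc=enc and i=i and G=G and f=f and W=W, OF K1]
    show ?thesis unfolding J2 C_def
      by (rule cSUP_upper[OF _ cap_bdd(1)[OF W]]) (use J1 in simp)
  qed
  have C0: "0 \<le> C"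
  proof -
    note J1 = J_eq(1)[where enc=enc and i=0, OF K1]
    note J2 = J_eq(2)[where enc=enc and i=0 and G=G and f=f and W=W, OF K1]
    have "0 \<le> igf G f UNIV (\<lambda>x. real (card {m \<in> {1..K}. enc m 0 = x}) / real K) UNIV W"
      by (rule cap_bdd(2)[OF W J1])
    then show ?thesis using Jle[of 0] J2 by linarith
  qed
  have "G bin \<le> igf G f {1..K} ?u (Yk n) (Pk W enc n)"
    unfolding bin_def
    by (rule numer[OF G_convex K W]) (use dec_range err in \<open>auto simp: Yk_def Pk_def\<close>)
  also have "\<dots> \<le> (\<Sum>i<n. igf G f {1..K} ?u UNIV (\<lambda>m. W (enc m i)))"
    by (rule chain[OF subadd K1 W])
  also have "\<dots> \<le> (\<Sum>i<n. C)" by (rule sum_mono) (rule Jle)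
  finally have main: "G bin \<le> real n * C" by simp
  show ?thesis
  proof (cases "C = 0")
    case True then show ?thesis unfolding C_def[symmetric] by simp
  next
    case False
    then have "C > 0" using C0 by simp
    then show ?thesis unfolding C_def[symmetric] bin_def[symmetric] using main
      by (simp add: divide_le_eq)
  qed
qed


end
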